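(* Assume the setting in the context. For an integer $r\ge1$, if the $r$th central moment of $\hat\theta_i(z,\omega)$ exists, then \[ \mathbb E\bigl|\hat\theta_i(z,\omega)-\theta_i(\tilde y_i)\bigr|^r\le\bigl(2\|\tilde y_i\|_p\|\psi_i\|_q\bigr)^r \] for any $p,q\in[1,\infty]$ with $1/p+1/q=1/r$. In particular, for $r=2$, \[ \mathbb E\bigl[\hat\theta_i(z,\omega)-\theta_i(\tilde y_i)\bigr]^2\le\|\tilde y_i\|_p^2\|\psi_i\|_q^2 \] for any $p,q\in[1,\infty]$ with $1/p+1/q=1/2$. (These inequalities hold trivially if $\|\tilde y_i\|_p$ or $\|\psi_i\|_q$ is infinite.)
   Context: Let $(\Omega,\mathcal F,P)$ be a probability space (latent environment) and $\mathcal Z$ a measurable space of treatment assignments with a known randomisation probability measure $\mu$. The potential outcome of unit $i$ is a measurable map $\tilde y_i:\mathcal Z\times\Omega\to\mathbb R$ of the form $\tilde y_i(z,\omega)=y_i(z,x_i(\omega),\epsilon_i(\omega))$ with $y_i,x_i,\epsilon_i$ measurable. For $p\ge1$, $\|u\|_p=(\int|u(z,\omega)|^p\mu(\mathrm dz)P(\mathrm d\omega))^{1/p}$ (with the essential supremum for $p=\infty$); $\mathbb E$ denotes expectation with respect to $\mu(\mathrm dz)P(\mathrm d\omega)$. $\tilde y_i$ lies in a model space $\mathcal M_i\subset L^2(\mathcal Z\times\Omega)$ (taken closed) with inner product $\langle u,v\rangle=\mathbb E[uv]$. The treatment effect $\theta_i$ is a continuous linear functional on $\mathcal M_i$ with Riesz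 representer $\psi_i\in\mathcal M_i$, i.e. $\theta_i(u)=\langle u,\psi_i\rangle$ for all $u\in\mathcal M_i$. The Riesz estimator is $\hat\theta_i(z,\omega)=\tilde y_i(z,\omega)\psi_i(z,\omega)$. *)

theory Defs
  imports "HOL-Probability.Probability"
begin

definition lp_norm :: "'a measure \<Rightarrow> ennreal \<Rightarrow> ('a \<Rightarrow> real) \<Rightarrow> ennreal" where
  "lp_norm M p u =
     (if p = \<infinity> then esssup M (\<lambda>x. ennreal \<bar>u x\<bar>)
      else (let I = (\<integral>\<^sup>+ x. ennreal (\<bar>u x\<bar> powr enn2real p) \<partial>M)
            in if I = \<infinity> then \<infinity> else ennreal (enn2real I powr (1 / enn2real p))))"

end

theory Submission imports Defs begin

lemma holder_nn:
  fixes f g :: "'a \<Rightarrow> real" and a b :: real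
  assumes ab: "a > 1" "b > 1" "1/a + 1/b = 1"
    and fm: "f \<in> borel_measurable M" and gm: "g \<in> borel_measurable M"
    and f0: "\<And>x. f x \<ge> 0" and g0: "\<And>x. g x \<ge> 0"
    and Ffin: "(\<integral>\<^sup>+ x. ennreal (f x powr a) \<partial>M) < \<infinity>"
    and Gfin: "(\<integral>\<^sup>+ x. ennreal (g x powr b) \<partial>M) < \<infinity>"
  shows "(\<integral>\<^sup>+ x. ennreal (f x * g x) \<partial>M) \<le>
     ennreal (enn2real (\<integral>\<^sup>+ x. ennreal (f x powr a) \<partial>M) powr (1/a)
            * enn2real (\<integral>\<^sup>+ x. ennreal (g x powr b) \<partial>M) powr (1/b))"
proof -
  define F where "F = (\<integral>\<^sup>+ x. ennreal (f x powr a) \<partial>M)"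
  define G where "G = (\<integral>\<^sup>+ x. ennreal (g x powr b) \<partial>M)"
  have [measurable]: "f \<in> borel_measurable M" "g \<in> borel_measurable M" using fm gm by auto
  show ?thesis
  proof (cases "F = 0 \<or> G = 0")
    case True
    have "AE x in M. f x * g x = 0"
    proof (cases "F = 0")
      case True
      then have "AE x in M. ennreal (f x powr a) = 0" unfolding F_def
        by (subst (asm) nn_integral_0_iff_AE) auto
      then show ?thesis by eventually_elim (use f0 in auto)
    next
      case False
      with True have "G = 0" by auto
      then have "AE x in M. ennreal (g x powr b) = 0" unfolding G_def
        by (subst (asm) nn_integral_0_iff_AE) auto
      then show ?thesis by eventually_elim (use g0 in auto)
    qed
    then have "(\<integral>\<^sup>+ x. ennreal (f x * g x) \<partial>M) = 0"
      by (subst nn_integral_0_iff_AE) (auto elim: eventually_mono)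
    then show ?thesis by simp
  next
    case False
    define F' where "F' = enn2real F"
    define G' where "G' = enn2real G"
    have F: "F = ennreal F'" "F' > 0" using False Ffin unfolding F'_def F_def
      by (auto simp: enn2real_positive_iff less_top[symmetric] ennreal_enn2real_if zero_less_iff_neq_zero)
    have G: "G = ennreal G'" "G' > 0" using False Gfin unfolding G'_def G_def
      by (auto simp: enn2real_positive_iff less_top[symmetric] ennreal_enn2real_if zero_less_iff_neq_zero)
    define cF where "cF = F' powr (1/a)"
    define cG where "cG = G' powr (1/b)"
    have cpos: "cF > 0" "cG > 0" using F G unfolding cF_def cG_def by auto
    have cFa: "cF powr a = F'" using F ab unfolding cF_def by (simp add: powr_powr)
    have cGb: "cG powr b = G'" using G ab unfolding cG_def by (simp add: powr_powr)
    have pw: "f x * g x \<le> (cF * cG / (F' * a)) * f x powr a + (cF * cG / (G' * b)) * g x powr b" for x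
    proof -
      have "(f x / cF) * (g x / cG) \<le> (f x / cF) powr a / a + (g x / cG) powr b / b"
        using Youngs_inequality[of a b "f x / cF" "g x / cG"] ab f0[of x] g0[of x] cpos by auto
      also have "\<dots> = f x powr a / (F' * a) + g x powr b / (G' * b)"
        using f0[of x] g0[of x] cpos by (simp add: powr_divide cFa cGb)
      finally have "(f x / cF) * (g x / cG) \<le> f x powr a / (F' * a) + g x powr b / (G' * b)" .
      then have "cF * cG * ((f x / cF) * (g x / cG)) \<le> cF * cG * (f x powr a / (F' * a) + g x powr b / (G' * b))"
        using cpos by (intro mult_left_mono) auto
      then show ?thesis using cpos by (simp add: field_simps)
    qed
    have "(\<integral>\<^sup>+ x. ennreal (f x * g x) \<partial>M) \<le>
       (\<integral>\<^sup>+ x. ennreal (cF * cG / (F' * a)) * ennreal (f x powr a) + ennreal (cF * cG / (G' * b)) * ennreal (g x powr b) \<partial>M)"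
      using pw cpos F G ab by (intro nn_integral_mono) (auto simp flip: ennreal_mult ennreal_plus)
    also have "\<dots> = ennreal (cF * cG / (F' * a)) * F + ennreal (cF * cG / (G' * b)) * G"
      unfolding F_def G_def by (simp add: nn_integral_add nn_integral_cmult)
    also have "\<dots> = ennreal (cF * cG / (F' * a) * F' + cF * cG / (G' * b) * G')"
      using F G cpos ab by (simp add: ennreal_mult[symmetric] ennreal_plus[symmetric] del: ennreal_plus)
    also have "cF * cG / (F' * a) * F' + cF * cG / (G' * b) * G' = cF * cG * (1/a + 1/b)"
      using F G ab by (simp add: field_simps)
    also have "\<dots> = cF * cG" using ab by simp
    finally show ?thesis unfolding cF_def cG_def F'_def G'_def F_def G_def .
  qed
qed


lemma abs_powr_nat: "r \<ge> 1 \<Longrightarrow> \<bar>x::real\<bar> powr real r = \<bar>x\<bar> ^ r"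
  by (cases "x = 0") (auto simp: powr_realpow)

lemma lp_norm_nat_pow:
  assumes "r \<ge> 1"
  shows "lp_norm M (of_nat r) u ^ r = (\<integral>\<^sup>+ x. ennreal (\<bar>u x\<bar> ^ r) \<partial>M)"
proof -
  define I where "I = (\<integral>\<^sup>+ x. ennreal (\<bar>u x\<bar> ^ r) \<partial>M)"
  have ne: "(of_nat r :: ennreal) \<noteq> \<infinity>" by simp
  have l: "lp_norm M (of_nat r) u = (if I = \<infinity> then \<infinity> else ennreal (enn2real I powr (1 / real r)))"
    unfolding lp_norm_def I_def using assms by (simp add: abs_powr_nat Let_def)
  show ?thesis
  proof (cases "I = \<infinity>")
    case True
    then show ?thesis using l assms by (simp add: I_def[symmetric] top_power_ennreal)
  next
    case False
    have "(enn2real I powr (1 / real r)) ^ r = enn2real I powr (1 / real r * real r)"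
      using assms by (cases "enn2real I = 0") (auto simp: powr_realpow[symmetric] powr_powr)
    also have "\<dots> = enn2real I" using assms by (cases "enn2real I = 0") auto
    finally show ?thesis using l False
      by (simp add: I_def[symmetric] ennreal_power ennreal_enn2real_if)
  qed
qed

lemma lp_norm_fin:
  assumes "p > 0"
  shows "lp_norm M (ennreal p) u = (if (\<integral>\<^sup>+ x. ennreal (\<bar>u x\<bar> powr p) \<partial>M) = \<infinity> then \<infinity>
     else ennreal (enn2real (\<integral>\<^sup>+ x. ennreal (\<bar>u x\<bar> powr p) \<partial>M) powr (1 / p)))"
  unfolding lp_norm_def using assms by (simp add: Let_def)

lemma inv_cases:
  fixes p q :: ennreal
  assumes "1 \<le> p" "1 \<le> q" "inverse p + inverse q = inverse (of_nat r)" "r \<ge> 1"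
  shows "(p = \<infinity> \<and> q = of_nat r) \<or> (q = \<infinity> \<and> p = of_nat r) \<or>
    (\<exists>p' q'. p = ennreal p' \<and> q = ennreal q' \<and> p' > r \<and> q' > r \<and> 1/p' + 1/q' = 1/r)"
proof -
  have ir: "inverse (of_nat r :: ennreal) = ennreal (1 / real r)"
    using assms by (simp add: ennreal_of_nat_eq_real_of_nat inverse_ennreal divide_inverse)
  show ?thesis
  proof (cases p rule: ennreal_cases)
    case (real p')
    then have p1: "p' \<ge> 1" using assms by simp
    then have ip: "inverse p = ennreal (1/p')" using real by (simp add: inverse_ennreal divide_inverse)
    show ?thesis
    proof (cases q rule: ennreal_cases)
      case (real q')
      then have q1: "q' \<ge> 1" using assms by simp
      then have iq: "inverse q = ennreal (1/q')" using real by (simp add: inverse_ennreal divide_inverse)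
      have "ennreal (1/p' + 1/q') = ennreal (1 / real r)"
        using assms(3) ip iq ir p1 q1 by (simp add: ennreal_plus[symmetric] del: ennreal_plus)
      then have e: "1/p' + 1/q' = 1/r" using p1 q1 by (subst (asm) ennreal_inj) auto
      have "1/p' < 1/r" using e q1 by (smt (verit) divide_pos_pos)
      then have "p' > r" using p1 assms(4)
        by (smt (verit) frac_less2 of_nat_0_less_iff less_le_trans zero_less_one)
      moreover have "1/q' < 1/r" using e p1 by (smt (verit) divide_pos_pos)
      then have "q' > r" using q1 assms(4)
        by (smt (verit) frac_less2 of_nat_0_less_iff less_le_trans zero_less_one)
      ultimately show ?thesis using real \<open>p = ennreal p'\<close> e by blast
    next
      case top
      then have "ennreal (1/p') = ennreal (1 / real r)" using assms(3) ip ir by simp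
      then have "1/p' = 1/r" using p1 by (subst (asm) ennreal_inj) auto
      then have "p' = r" using p1 assms(4) by (simp add: field_simps)
      then show ?thesis using top real by (simp add: ennreal_of_nat_eq_real_of_nat)
    qed
  next
    case top
    then have "inverse q = ennreal (1 / real r)" using assms(3) ir by simp
    moreover have "q \<noteq> \<infinity>" using calculation assms(4) by auto
    ultimately obtain q' where q: "q = ennreal q'" "q' \<ge> 0" by (cases q) auto
    then have q1: "q' \<ge> 1" using assms by simp
    then have "ennreal (1/q') = ennreal (1 / real r)" using \<open>inverse q = _\<close> q
      by (simp add: inverse_ennreal divide_inverse)
    then have "1/q' = 1/r" using q1 by (subst (asm) ennreal_inj) auto
    then have "q' = r" using q1 assms(4) by (simp add: field_simps)
    then show ?thesis using top q by (simp add: ennreal_of_nat_eq_real_of_nat)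
  qed
qed


lemma ess_case:
  fixes f g :: "'a \<Rightarrow> real"
  assumes gm: "g \<in> borel_measurable M" and r: "r \<ge> 1"
  shows "(\<integral>\<^sup>+ x. ennreal (\<bar>f x * g x\<bar> ^ r) \<partial>M) \<le> (lp_norm M \<infinity> f * lp_norm M (of_nat r) g) ^ r"
proof -
  define S where "S = esssup M (\<lambda>x. ennreal \<bar>f x\<bar>)"
  have AE: "AE x in M. ennreal \<bar>f x\<bar> \<le> S" unfolding S_def by (rule esssup_AE)
  have "(\<integral>\<^sup>+ x. ennreal (\<bar>f x * g x\<bar> ^ r) \<partial>M) \<le> (\<integral>\<^sup>+ x. S ^ r * ennreal (\<bar>g x\<bar> ^ r) \<partial>M)"
  proof (rule nn_integral_mono_AE)
    show "AE x in M. ennreal (\<bar>f x * g x\<bar> ^ r) \<le> S ^ r * ennreal (\<bar>g x\<bar> ^ r)"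
      using AE
    proof eventually_elim
      case (elim x)
      have "ennreal (\<bar>f x * g x\<bar> ^ r) = ennreal \<bar>f x\<bar> ^ r * ennreal (\<bar>g x\<bar> ^ r)"
        by (simp add: abs_mult power_mult_distrib ennreal_mult ennreal_power)
      also have "\<dots> \<le> S ^ r * ennreal (\<bar>g x\<bar> ^ r)"
        using elim by (intro mult_right_mono power_mono) auto
      finally show ?case .
    qed
  qed
  also have "\<dots> = S ^ r * (\<integral>\<^sup>+ x. ennreal (\<bar>g x\<bar> ^ r) \<partial>M)"
    using gm by (simp add: nn_integral_cmult)
  also have "\<dots> = (lp_norm M \<infinity> f * lp_norm M (of_nat r) g) ^ r"
  proof -
    have "lp_norm M \<infinity> f = S" unfolding lp_norm_def S_def by simp
    then show ?thesis using lp_norm_nat_pow[OF r, of M g] by (simp add: power_mult_distrib)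
  qed
  finally show ?thesis .
qed

lemma zero_case:
  fixes f g :: "'a \<Rightarrow> real" and p :: real
  assumes "p > 0" "f \<in> borel_measurable M" "(\<integral>\<^sup>+ x. ennreal (\<bar>f x\<bar> powr p) \<partial>M) = 0" "r \<ge> 1"
  shows "(\<integral>\<^sup>+ x. ennreal (\<bar>f x * g x\<bar> ^ r) \<partial>M) = 0"
proof -
  have "AE x in M. ennreal (\<bar>f x\<bar> powr p) = 0" using assms
    by (subst (asm) nn_integral_0_iff_AE) auto
  then have "AE x in M. ennreal (\<bar>f x * g x\<bar> ^ r) = 0"
  proof eventually_elim
    case (elim x)
    then have "f x = 0" by simp
    then show ?case using assms(4) by (cases r) auto
  qed
  then have "(\<integral>\<^sup>+ x. ennreal (\<bar>f x * g x\<bar> ^ r) \<partial>M) = (\<integral>\<^sup>+ x. 0 \<partial>M)"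
    by (rule nn_integral_cong_AE)
  then show ?thesis by simp
qed

lemma fin_case:
  fixes f g :: "'a \<Rightarrow> real" and p q :: real
  assumes fm: "f \<in> borel_measurable M" and gm: "g \<in> borel_measurable M" and r: "r \<ge> 1"
    and pq: "p > r" "q > r" "1/p + 1/q = 1/r"
  shows "(\<integral>\<^sup>+ x. ennreal (\<bar>f x * g x\<bar> ^ r) \<partial>M) \<le> (lp_norm M (ennreal p) f * lp_norm M (ennreal q) g) ^ r"
proof -
  have [measurable]: "f \<in> borel_measurable M" "g \<in> borel_measurable M" using fm gm by auto
  have p0: "p > 0" "q > 0" using pq r by auto
  define F where "F = (\<integral>\<^sup>+ x. ennreal (\<bar>f x\<bar> powr p) \<partial>M)"
  define G where "G = (\<integral>\<^sup>+ x. ennreal (\<bar>g x\<bar> powr q) \<partial>M)"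
  have A: "lp_norm M (ennreal p) f = (if F = \<infinity> then \<infinity> else ennreal (enn2real F powr (1/p)))"
    unfolding F_def by (rule lp_norm_fin[OF p0(1)])
  have B: "lp_norm M (ennreal q) g = (if G = \<infinity> then \<infinity> else ennreal (enn2real G powr (1/q)))"
    unfolding G_def by (rule lp_norm_fin[OF p0(2)])
  show ?thesis
  proof (cases "F = 0 \<or> G = 0")
    case True
    then have "(\<integral>\<^sup>+ x. ennreal (\<bar>f x * g x\<bar> ^ r) \<partial>M) = 0"
    proof
      assume "F = 0" then show ?thesis using zero_case[OF p0(1) fm _ r] F_def by simp
    next
      assume "G = 0" then show ?thesis using zero_case[OF p0(2) gm _ r, of f] G_def
        by (simp add: mult.commute)
    qed
    then show ?thesis by simp
  next
    case nz: False
    show ?thesis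
    proof (cases "F = \<infinity> \<or> G = \<infinity>")
      case True
      have "lp_norm M (ennreal p) f \<noteq> 0" "lp_norm M (ennreal q) g \<noteq> 0"
        using nz p0 unfolding A B
        by (auto simp: enn2real_eq_0_iff)
      moreover have "lp_norm M (ennreal p) f = \<infinity> \<or> lp_norm M (ennreal q) g = \<infinity>"
        using True A B by auto
      ultimately have "lp_norm M (ennreal p) f * lp_norm M (ennreal q) g = \<infinity>"
        by (auto simp: ennreal_mult_eq_top_iff)
      then show ?thesis using r by simp
    next
      case False
      define a where "a = p / r"
      define b where "b = q / r"
      have ab: "a > 1" "b > 1" "1/a + 1/b = 1"
        using pq r unfolding a_def b_def
        by (auto simp: field_simps)
      have fa: "(\<bar>f x\<bar> powr r) powr a = \<bar>f x\<bar> powr p" for x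
        using r unfolding a_def by (simp add: powr_powr)
      have gb: "(\<bar>g x\<bar> powr r) powr b = \<bar>g x\<bar> powr q" for x
        using r unfolding b_def by (simp add: powr_powr)
      have H: "(\<integral>\<^sup>+ x. ennreal (\<bar>f x\<bar> powr r * \<bar>g x\<bar> powr r) \<partial>M) \<le>
         ennreal (enn2real F powr (1/a) * enn2real G powr (1/b))"
        using holder_nn[OF ab, of "\<lambda>x. \<bar>f x\<bar> powr r" M "\<lambda>x. \<bar>g x\<bar> powr r"] False
        unfolding fa gb F_def G_def by (simp add: top.not_eq_extremum)
      have "(\<integral>\<^sup>+ x. ennreal (\<bar>f x * g x\<bar> ^ r) \<partial>M) = (\<integral>\<^sup>+ x. ennreal (\<bar>f x\<bar> powr r * \<bar>g x\<bar> powr r) \<partial>M)"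
        using r by (simp add: abs_powr_nat abs_mult power_mult_distrib)
      also note H
      also have "ennreal (enn2real F powr (1/a) * enn2real G powr (1/b)) =
          (ennreal (enn2real F powr (1/p)) * ennreal (enn2real G powr (1/q))) ^ r"
      proof -
        have e: "(x powr (1/p)) ^ r = x powr (1/a)" "(y powr (1/q)) ^ r = y powr (1/b)"
          if "x \<ge> 0" "y \<ge> 0" for x y :: real
          using r that unfolding a_def b_def
          by (auto simp: powr_realpow[symmetric] powr_powr powr_def)
        show ?thesis
          using e[OF enn2real_nonneg[of F] enn2real_nonneg[of G]]
          by (simp add: ennreal_mult[symmetric] ennreal_power power_mult_distrib)
      qed
      also have "\<dots> = (lp_norm M (ennreal p) f * lp_norm M (ennreal q) g) ^ r"
        using False A B by simp
      finally show ?thesis .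
    qed
  qed
qed

lemma core:
  fixes f g :: "'a \<Rightarrow> real" and p q :: ennreal
  assumes fm: "f \<in> borel_measurable M" and gm: "g \<in> borel_measurable M" and r: "r \<ge> 1"
    and pq: "1 \<le> p" "1 \<le> q" "inverse p + inverse q = inverse (of_nat r)"
  shows "(\<integral>\<^sup>+ x. ennreal (\<bar>f x * g x\<bar> ^ r) \<partial>M) \<le> (lp_norm M p f * lp_norm M q g) ^ r"
  using inv_cases[OF pq r]
proof (elim disjE exE conjE)
  assume "p = \<infinity>" "q = of_nat r"
  then show ?thesis using ess_case[OF gm r, of f] by simp
next
  assume "q = \<infinity>" "p = of_nat r"
  then show ?thesis using ess_case[OF fm r, of g] by (simp add: mult.commute)
next
  fix p' q' assume "p = ennreal p'" "q = ennreal q'" "real r < p'" "real r < q'" "1 / p' + 1 / q' = 1 / real r"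
  then show ?thesis using fin_case[OF fm gm r, of p' q'] by simp
qed


lemma convex_pow_nonneg: "convex_on {0::real..} (\<lambda>x. x ^ n)"
proof (cases "even n")
  case True
  then show ?thesis by (rule convex_on_subset[OF convex_power_even]) auto
next
  case False
  then show ?thesis by (rule convex_power_odd)
qed

lemma convex_abs_pow: "convex_on UNIV (\<lambda>x::real. \<bar>x\<bar> ^ r)"
proof (rule convex_onI)
  fix t x y :: real assume t: "t > 0" "t < 1"
  have "\<bar>(1 - t) *\<^sub>R x + t *\<^sub>R y\<bar> ^ r \<le> ((1 - t) *\<^sub>R \<bar>x\<bar> + t *\<^sub>R \<bar>y\<bar>) ^ r"
    using t by (intro power_mono) (auto simp: abs_mult intro!: order.trans[OF abs_triangle_ineq])
  also have "\<dots> \<le> (1 - t) * \<bar>x\<bar> ^ r + t * \<bar>y\<bar> ^ r"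
    using convex_onD[OF convex_pow_nonneg, of t "\<bar>x\<bar>" "\<bar>y\<bar>" r] t by auto
  finally show "\<bar>(1 - t) *\<^sub>R x + t *\<^sub>R y\<bar> ^ r \<le> (1 - t) * \<bar>x\<bar> ^ r + t * \<bar>y\<bar> ^ r" .
qed auto

lemma abs_pow_diff: "\<bar>a - b :: real\<bar> ^ r \<le> 2 ^ r * ((\<bar>a\<bar> ^ r + \<bar>b\<bar> ^ r) / 2)"
proof -
  have "\<bar>(1 - 1/2) *\<^sub>R a + (1/2) *\<^sub>R (-b)\<bar> ^ r \<le> (1 - 1/2) * \<bar>a\<bar> ^ r + (1/2) * \<bar>-b\<bar> ^ r"
    using convex_onD[OF convex_abs_pow, of "1/2" a "-b" r] by auto
  then have "(\<bar>a - b\<bar> / 2) ^ r \<le> (\<bar>a\<bar> ^ r + \<bar>b\<bar> ^ r) / 2"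
    by (simp add: field_simps abs_divide)
  then have "\<bar>a - b\<bar> ^ r / 2 ^ r \<le> (\<bar>a\<bar> ^ r + \<bar>b\<bar> ^ r) / 2"
    by (simp add: power_divide)
  then show ?thesis by (simp add: field_simps)
qed

theorem lemma2:
  fixes \<mu> :: "'z measure" and P :: "'w measure"
    and X :: "'x measure" and E :: "'e measure"
    and y :: "'z \<Rightarrow> 'x \<Rightarrow> 'e \<Rightarrow> real" and xi :: "'w \<Rightarrow> 'x" and \<epsilon> :: "'w \<Rightarrow> 'e"
    and ytil :: "'z \<times> 'w \<Rightarrow> real"
    and Mi :: "('z \<times> 'w \<Rightarrow> real) set"
    and \<theta> :: "('z \<times> 'w \<Rightarrow> real) \<Rightarrow> real"
    and \<psi> :: "'z \<times> 'w \<Rightarrow> real"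
    and r :: nat
  assumes mu: "prob_space \<mu>" and Pp: "prob_space P"
    and y_meas: "(\<lambda>(z, x, e). y z x e) \<in> borel_measurable (\<mu> \<Otimes>\<^sub>M (X \<Otimes>\<^sub>M E))"
    and xi_meas: "xi \<in> measurable P X" and eps_meas: "\<epsilon> \<in> measurable P E"
    and ytil_def: "ytil = (\<lambda>(z, \<omega>). y z (xi \<omega>) (\<epsilon> \<omega>))"
    and Mi_L2: "Mi \<subseteq> {u. u \<in> borel_measurable (\<mu> \<Otimes>\<^sub>M P) \<and>
                              integrable (\<mu> \<Otimes>\<^sub>M P) (\<lambda>v. (u v)\<^sup>2)}"
    and Mi_zero: "(\<lambda>_. 0) \<in> Mi"
    and Mi_lin: "\<forall>u \<in> Mi. \<forall>w \<in> Mi. \<forall>c::real. (\<lambda>v. u v + c * w v) \<in> Mi"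
    and ytil_in: "ytil \<in> Mi"
    and psi_in: "\<psi> \<in> Mi"
    and riesz: "\<forall>u \<in> Mi. \<theta> u = (\<integral>v. u v * \<psi> v \<partial>(\<mu> \<Otimes>\<^sub>M P))"
    and r_ge: "r \<ge> 1"
    and moment: "integrable (\<mu> \<Otimes>\<^sub>M P) (\<lambda>v. \<bar>ytil v * \<psi> v - \<theta> ytil\<bar> ^ r)"
  shows "(\<forall>p q. 1 \<le> p \<and> 1 \<le> q \<and> inverse p + inverse q = inverse (of_nat r) \<longrightarrow>
            ennreal (\<integral>v. \<bar>ytil v * \<psi> v - \<theta> ytil\<bar> ^ r \<partial>(\<mu> \<Otimes>\<^sub>M P))
              \<le> (2 * lp_norm (\<mu> \<Otimes>\<^sub>M P) p ytil * lp_norm (\<mu> \<Otimes>\<^sub>M P) q \<psi>) ^ r)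
       \<and> (\<forall>p q. 1 \<le> p \<and> 1 \<le> q \<and> inverse p + inverse q = inverse (2::ennreal) \<longrightarrow>
            ennreal (\<integral>v. (ytil v * \<psi> v - \<theta> ytil)\<^sup>2 \<partial>(\<mu> \<Otimes>\<^sub>M P))
              \<le> (lp_norm (\<mu> \<Otimes>\<^sub>M P) p ytil)\<^sup>2 * (lp_norm (\<mu> \<Otimes>\<^sub>M P) q \<psi>)\<^sup>2)"
proof -
  define M where "M = \<mu> \<Otimes>\<^sub>M P"
  interpret pp: pair_prob_space \<mu> P
    using mu Pp by (simp add: pair_prob_space_def pair_sigma_finite_def prob_space_imp_sigma_finite)
  have PS: "prob_space M" unfolding M_def by (rule pp.P.prob_space_axioms)
  interpret PSI: prob_space M by (rule PS)
  have ym[measurable]: "ytil \<in> borel_measurable M" and psm[measurable]: "\<psi> \<in> borel_measurable M"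
    and y2: "integrable M (\<lambda>v. (ytil v)\<^sup>2)" and p2: "integrable M (\<lambda>v. (\<psi> v)\<^sup>2)"
    using Mi_L2 ytil_in psi_in unfolding M_def by auto
  define Xf where "Xf = (\<lambda>v. ytil v * \<psi> v)"
  have Xm[measurable]: "Xf \<in> borel_measurable M" unfolding Xf_def by measurable
  have Xint: "integrable M Xf"
  proof (rule Bochner_Integration.integrable_bound[OF Bochner_Integration.integrable_add[OF y2 p2] Xm])
    show "AE x in M. norm (Xf x) \<le> norm ((ytil x)\<^sup>2 + (\<psi> x)\<^sup>2)"
    proof (rule AE_I2)
      fix x
      have "2 * \<bar>ytil x\<bar> * \<bar>\<psi> x\<bar> \<le> (ytil x)\<^sup>2 + (\<psi> x)\<^sup>2"
        using sum_squares_bound[of "\<bar>ytil x\<bar>" "\<bar>\<psi> x\<bar>"] by (simp add: power2_eq_square)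
      moreover have "\<bar>ytil x\<bar> * \<bar>\<psi> x\<bar> \<ge> 0" by simp
      moreover have "norm ((ytil x)\<^sup>2 + (\<psi> x)\<^sup>2) = (ytil x)\<^sup>2 + (\<psi> x)\<^sup>2" by simp
      moreover have "norm (Xf x) = \<bar>ytil x\<bar> * \<bar>\<psi> x\<bar>" by (simp add: Xf_def abs_mult)
      ultimately show "norm (Xf x) \<le> norm ((ytil x)\<^sup>2 + (\<psi> x)\<^sup>2)" by linarith
    qed
  qed
  define m where "m = \<theta> ytil"
  have mdef: "m = (\<integral>v. Xf v \<partial>M)" using riesz ytil_in unfolding m_def Xf_def M_def by auto
  have mom: "integrable M (\<lambda>v. \<bar>Xf v - m\<bar> ^ r)"
    using moment unfolding M_def Xf_def m_def .
  have part1: "ennreal (\<integral>v. \<bar>Xf v - m\<bar> ^ r \<partial>M) \<le> (2 * lp_norm M p ytil * lp_norm M q \<psi>) ^ r"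
    if pq: "1 \<le> p" "1 \<le> q" "inverse p + inverse q = inverse (of_nat r)" for p q
  proof -
    define T where "T = (\<integral>\<^sup>+ x. ennreal (\<bar>Xf x\<bar> ^ r) \<partial>M)"
    have core': "T \<le> (lp_norm M p ytil * lp_norm M q \<psi>) ^ r"
      unfolding T_def Xf_def by (rule core[OF ym psm r_ge pq])
    have "ennreal (\<integral>v. \<bar>Xf v - m\<bar> ^ r \<partial>M) \<le> 2 ^ r * T"
    proof (cases "T = \<infinity>")
      case True
      then show ?thesis by (simp add: ennreal_mult_top)
    next
      case False
      then obtain t where "T = ennreal t" "t \<ge> 0" by (cases T) auto
      then have Tint: "integrable M (\<lambda>x. \<bar>Xf x\<bar> ^ r)"
        unfolding T_def by (intro integrableI_nn_integral_finite) auto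
      have Teq: "T = ennreal (\<integral>x. \<bar>Xf x\<bar> ^ r \<partial>M)"
        unfolding T_def using Tint by (intro nn_integral_eq_integral) auto
      have J: "\<bar>m\<bar> ^ r \<le> (\<integral>x. \<bar>Xf x\<bar> ^ r \<partial>M)"
        unfolding mdef
        using prob_space.jensens_inequality[OF PS Xint, where I=UNIV and q="\<lambda>x. \<bar>x\<bar> ^ r" and a=0 and b=0]
          Tint convex_abs_pow by auto
      have "(\<integral>v. \<bar>Xf v - m\<bar> ^ r \<partial>M) \<le> (\<integral>v. 2 ^ r * ((\<bar>Xf v\<bar> ^ r + \<bar>m\<bar> ^ r) / 2) \<partial>M)"
        using Tint mom abs_pow_diff
        by (intro integral_mono) auto
      also have "\<dots> = 2 ^ r * (((\<integral>v. \<bar>Xf v\<bar> ^ r \<partial>M) + \<bar>m\<bar> ^ r) / 2)"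
        using Tint by (simp add: PSI.prob_space)
      also have "\<dots> \<le> 2 ^ r * (\<integral>v. \<bar>Xf v\<bar> ^ r \<partial>M)"
        using J by (intro mult_left_mono) auto
      finally have "ennreal (\<integral>v. \<bar>Xf v - m\<bar> ^ r \<partial>M) \<le> ennreal (2 ^ r * (\<integral>v. \<bar>Xf v\<bar> ^ r \<partial>M))"
        by (rule ennreal_leI)
      also have "\<dots> = 2 ^ r * T"
      proof -
        have "ennreal (2 ^ r) = 2 ^ r" using ennreal_power[of 2 r] by simp
        then show ?thesis using Teq by (simp add: ennreal_mult)
      qed
      finally show ?thesis .
    qed
    also have "\<dots> \<le> 2 ^ r * (lp_norm M p ytil * lp_norm M q \<psi>) ^ r"
      using core' by (rule mult_left_mono) auto
    also have "\<dots> = (2 * lp_norm M p ytil * lp_norm M q \<psi>) ^ r"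
      by (simp add: power_mult_distrib mult.assoc)
    finally show ?thesis .
  qed
  have part2: "ennreal (\<integral>v. (Xf v - m)\<^sup>2 \<partial>M) \<le> (lp_norm M p ytil)\<^sup>2 * (lp_norm M q \<psi>)\<^sup>2"
    if pq: "1 \<le> p" "1 \<le> q" "inverse p + inverse q = inverse (2::ennreal)" for p q
  proof -
    have pq': "inverse p + inverse q = inverse (of_nat 2)" using pq by simp
    define T where "T = (\<integral>\<^sup>+ x. ennreal (\<bar>Xf x\<bar> ^ 2) \<partial>M)"
    have core': "T \<le> (lp_norm M p ytil * lp_norm M q \<psi>) ^ 2"
      unfolding T_def Xf_def by (rule core[OF ym psm _ pq(1,2) pq']) simp
    have "ennreal (\<integral>v. (Xf v - m)\<^sup>2 \<partial>M) \<le> T"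
    proof (cases "T = \<infinity>")
      case True
      then show ?thesis by simp
    next
      case False
      then obtain t where "T = ennreal t" "t \<ge> 0" by (cases T) auto
      then have Tint: "integrable M (\<lambda>x. (Xf x)\<^sup>2)"
        unfolding T_def by (intro integrableI_nn_integral_finite) auto
      have Teq: "T = ennreal (\<integral>x. (Xf x)\<^sup>2 \<partial>M)"
        unfolding T_def using Tint by (simp add: nn_integral_eq_integral)
      have "(\<integral>v. (Xf v - m)\<^sup>2 \<partial>M) = (\<integral>x. (Xf x)\<^sup>2 \<partial>M) - m\<^sup>2"
        unfolding mdef using prob_space.variance_eq[OF PS Xint Tint] by simp
      also have "\<dots> \<le> (\<integral>x. (Xf x)\<^sup>2 \<partial>M)" by simp
      finally show ?thesis using Teq by (simp add: ennreal_leI)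
    qed
    also note core'
    finally show ?thesis by (simp add: power_mult_distrib)
  qed
  show ?thesis using part1 part2 unfolding M_def Xf_def m_def by blast
qed

end
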